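(* For any parameters $l_c>1$ and $r_c\in(0,1)$ let $(e^{2u(t)}(ds^2+d\theta^2))_{t\in[0,\infty)}$ be the corresponding cb-Ricci flow. Then \[ u(t,s) \ge -\log\cosh(s-s_b) + \tfrac12\log\bigl(2(1-t)\bigr) \] for all $(t,s)\in[0,1)\times\mathbb R$.
   Context: Setting (cb-surface): for a length $l_c>0$ and radius $r_c\in(0,1)$, the cb-surface is the rotationally symmetric plane $(\mathbb C,g_{\mathsf{cb}})$ with $g_{\mathsf{cb}}=e^{2u_{\mathsf{cb}}(s)}(ds^2+d\theta^2)$ in logarithmic cylindrical coordinates $z=e^{-s+s_e+i\theta}$, $(s,\theta)\in\mathbb R\times[0,2\pi)$, where $u_{\mathsf{cb}}(s)=-s+s_e$ for $s\le s_0$; $u_{\mathsf{cb}}(s)=-\log(r_c^{-1}\cos(r_cs+l_c))$ for $s\in(s_0,-l_c/r_c)$; $u_{\mathsf{cb}}(s)=\log r_c$ for $s\in[-l_c/r_c,0]$; $u_{\mathsf{cb}}(s)=-\log(r_c^{-1}\cos(r_cs))$ for $s\in(0,s_2]$; $u_{\mathsf{cb}}(s)=-\log\cosh(s-s_b)+\frac12\log2$ for $s>s_2$; with parameters $s_0\in(-(l_c+\pi/2)/r_c,-l_c/r_c)$, $s_e\in(s_0,-l_c/r_c)$, $s_2\in(0,\pi/(2r_c))$, $s_b>s_2$ chosen uniquely so that $u_{\mathsf{cb}}\in C^1(\mathbb R)$. The cb-Ricci flow is the Ricci flow $g(t)=e^{2u(t)}(ds^2+d\theta^2)$ on $\mathbb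 C$ with $g(0)=g_{\mathsf{cb}}$ which is instantaneously complete ($g(t)$ complete for $t>0$) and maximally stretched (for any Ricci flow $\tilde g(t)$ on $\mathbb C$, $t\in[0,\tilde T]$, with $\tilde g(0)\le g(0)$, one has $\tilde g(t)\le g(t)$), which exists and is unique for all time. *)

theory Defs
  imports "HOL-Analysis.Analysis"
begin

text \<open>Conformal factor of the cb-surface in logarithmic cylindrical coordinates:
  g_cb = exp(2 u_cb(s)) (ds^2 + d theta^2).\<close>
definition u_cb :: "real \<Rightarrow> real \<Rightarrow> real \<Rightarrow> real \<Rightarrow> real \<Rightarrow> real \<Rightarrow> real \<Rightarrow> real" where
  "u_cb lc rc s0 se s2 sb s =
     (if s \<le> s0 then - s + se
      else if s < - lc / rc then - ln (cos (rc * s + lc) / rc)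
      else if s \<le> 0 then ln rc
      else if s \<le> s2 then - ln (cos (rc * s) / rc)
      else - ln (cosh (s - sb)) + ln 2 / 2)"

text \<open>The same metric written as exp(2 w_cb(z)) |dz|^2 in the complex coordinate
  z = exp(-s + se + i theta); thus u = w + ln|z| = w + se - s.  At z = 0 the value is the
  (continuous) limit of the cap formula.\<close>
definition w_cb :: "real \<Rightarrow> real \<Rightarrow> real \<Rightarrow> real \<Rightarrow> real \<Rightarrow> real \<Rightarrow> complex \<Rightarrow> real" where
  "w_cb lc rc s0 se s2 sb z =
     (if z = 0 then 3 / 2 * ln 2 + sb - se
      else u_cb lc rc s0 se s2 sb (se - ln (cmod z)) - ln (cmod z))"

definition pdx :: "(complex \<Rightarrow> real) \<Rightarrow> complex \<Rightarrow> real" where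
  "pdx f z = deriv (\<lambda>\<xi>. f (Complex \<xi> (Im z))) (Re z)"

definition pdy :: "(complex \<Rightarrow> real) \<Rightarrow> complex \<Rightarrow> real" where
  "pdy f z = deriv (\<lambda>\<eta>. f (Complex (Re z) \<eta>)) (Im z)"

definition lap :: "(complex \<Rightarrow> real) \<Rightarrow> complex \<Rightarrow> real" where
  "lap f z = pdx (pdx f) z + pdy (pdy f) z"

definition ricci_flow_on :: "real set \<Rightarrow> (real \<Rightarrow> complex \<Rightarrow> real) \<Rightarrow> bool" where
  "ricci_flow_on I w \<longleftrightarrow>
     continuous_on (I \<times> UNIV) (\<lambda>p. w (fst p) (snd p)) \<and>
     continuous_on (I \<times> UNIV) (\<lambda>p. lap (w (fst p)) (snd p)) \<and>
     (\<forall>t\<in>I. \<forall>z.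
        (\<lambda>\<xi>. w t (Complex \<xi> (Im z))) differentiable (at (Re z)) \<and>
        (\<lambda>\<eta>. w t (Complex (Re z) \<eta>)) differentiable (at (Im z)) \<and>
        (\<lambda>\<xi>. pdx (w t) (Complex \<xi> (Im z))) differentiable (at (Re z)) \<and>
        (\<lambda>\<eta>. pdy (w t) (Complex (Re z) \<eta>)) differentiable (at (Im z)) \<and>
        ((\<lambda>\<tau>. w \<tau> z) has_real_derivative (exp (- 2 * w t z) * lap (w t) z)) (at t within I))"

definition complete_conformal :: "(complex \<Rightarrow> real) \<Rightarrow> bool" where
  "complete_conformal f \<longleftrightarrow>
     (\<forall>\<gamma> :: real \<Rightarrow> complex.
        \<gamma> C1_differentiable_on {0..<1} \<and> filterlim (\<lambda>\<tau>. cmod (\<gamma> \<tau>)) at_top (at_left 1) \<longrightarrow>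
        (\<integral>\<^sup>+ \<tau>. ennreal (exp (f (\<gamma> \<tau>)) * norm (vector_derivative \<gamma> (at \<tau>)))
              * indicator {0..<1} \<tau> \<partial>lborel) = \<infinity>)"

definition maximally_stretched :: "(real \<Rightarrow> complex \<Rightarrow> real) \<Rightarrow> bool" where
  "maximally_stretched w \<longleftrightarrow>
     (\<forall>T v. 0 < T \<and> ricci_flow_on {0..T} v \<and> (\<forall>z. v 0 z \<le> w 0 z) \<longrightarrow>
        (\<forall>t\<in>{0..T}. \<forall>z. v t z \<le> w t z))"

definition ic_ms_ricci_flow :: "(complex \<Rightarrow> real) \<Rightarrow> (real \<Rightarrow> complex \<Rightarrow> real) \<Rightarrow> bool" where
  "ic_ms_ricci_flow w0 w \<longleftrightarrow>
     ricci_flow_on {0<..} w \<and>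
     continuous_on ({0..} \<times> UNIV) (\<lambda>p. w (fst p) (snd p)) \<and>
     (\<forall>z. w 0 z = w0 z) \<and>
     (\<forall>t>0. complete_conformal (w t)) \<and>
     maximally_stretched w"

end

theory Submission
  imports Defs
begin

lemma deriv_phi: "((\<lambda>s. - ln (cosh (s - sb)) + ln 2 / 2) has_real_derivative - tanh (x - sb)) (at x)"
  by (auto intro!: derivative_eq_intros simp: tanh_def)

lemma deriv_p2:
  assumes "0 < rc" "\<bar>rc * x\<bar> < pi/2"
  shows "((\<lambda>s. - ln (cos (rc * s) / rc)) has_real_derivative rc * tan (rc * x)) (at x)"
proof -
  have c: "cos (rc*x) > 0" using assms by (intro cos_gt_zero_pi) auto
  show ?thesis using c assms
    by (auto intro!: derivative_eq_intros simp: tan_def field_simps)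
qed

lemma static_ineq:
  fixes lc rc s0 se s2 sb :: real
  assumes "lc > 1" and "0 < rc" and "rc < 1"
    and "- (lc + pi / 2) / rc < s0" and "s0 < - lc / rc"
    and "s0 < se" and "se < - lc / rc"
    and "0 < s2" and "s2 < pi / (2 * rc)"
    and "s2 < sb"
    and C1: "u_cb lc rc s0 se s2 sb C1_differentiable_on UNIV"
  shows "- ln (cosh (s - sb)) + ln 2 / 2 \<le> u_cb lc rc s0 se s2 sb s"
proof -
  define u where "u = u_cb lc rc s0 se s2 sb"
  define \<phi> where "\<phi> = (\<lambda>s. - ln (cosh (s - sb)) + ln 2 / 2)"
  define p2 where "p2 = (\<lambda>s. - ln (cos (rc * s) / rc))"
  have lcrc: "- lc / rc < 0" using assms by simp
  have s0neg: "s0 < 0" using assms lcrc by linarith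
  have uphi: "u x = \<phi> x" if "x > s2" for x
  proof -
    have "\<not> x \<le> s0" "\<not> x < - lc / rc" "\<not> x \<le> 0" "\<not> x \<le> s2"
      using that assms s0neg lcrc by linarith+
    thus ?thesis unfolding u_def \<phi>_def u_cb_def by (simp only: if_False)
  qed
  have up2: "u x = p2 x" if "0 < x" "x \<le> s2" for x
  proof -
    have "\<not> x \<le> s0" "\<not> x < - lc / rc" "\<not> x \<le> 0" "x \<le> s2"
      using that assms s0neg lcrc by linarith+
    thus ?thesis unfolding u_def p2_def u_cb_def by (simp only: if_False if_True)
  qed
  have rcs2: "rc * s2 < pi / 2" using assms by (simp add: field_simps)
  obtain D where D: "\<And>x. (u has_vector_derivative D x) (at x)" and cD: "continuous_on UNIV D"
    using C1 unfolding C1_differentiable_on_def u_def by auto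
  have Dr: "(u has_real_derivative D x) (at x)" for x
    using D has_real_derivative_iff_has_vector_derivative by blast
  have Dright: "D x = - tanh (x - sb)" if "x > s2" for x
  proof -
    have "(u has_real_derivative - tanh (x - sb)) (at x)"
      by (rule has_field_derivative_transform_within_open[OF deriv_phi[of sb x], of "{s2<..}"])
         (use that uphi in \<open>auto simp: \<phi>_def\<close>)
    thus ?thesis using Dr DERIV_unique by blast
  qed
  have Dmid: "D x = rc * tan (rc * x)" if "0 < x" "x < s2" for x
  proof -
    have "rc * x < rc * s2" "0 < rc * x" using that assms by simp_all
    hence "\<bar>rc * x\<bar> < pi/2" using rcs2 by linarith
    hence "(u has_real_derivative rc * tan (rc * x)) (at x)"
      by (intro has_field_derivative_transform_within_open[OF deriv_p2[OF assms(2)], of _ "{0<..<s2}"])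
         (use that up2 in \<open>auto simp: p2_def\<close>)
    thus ?thesis using Dr DERIV_unique by blast
  qed
  have isD: "isCont D x" for x using cD by (simp add: continuous_on_eq_continuous_at)
  have "(D \<longlongrightarrow> D s2) (at_right s2)"
    using isD[of s2] by (simp add: isCont_def filterlim_at_split)
  moreover have "(D \<longlongrightarrow> - tanh (s2 - sb)) (at_right s2)"
  proof -
    have "((\<lambda>x. - tanh (x - sb)) \<longlongrightarrow> - tanh (s2 - sb)) (at_right s2)"
      by (intro tendsto_intros) auto
    moreover have "\<forall>\<^sub>F x in at_right s2. - tanh (x - sb) = D x"
      using eventually_at_right_less[of s2] by eventually_elim (simp add: Dright)
    ultimately show ?thesis by (rule tendsto_cong[THEN iffD1, rotated])
  qed
  ultimately have D1: "D s2 = - tanh (s2 - sb)"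
    using tendsto_unique trivial_limit_at_right_real by blast
  have "(D \<longlongrightarrow> D s2) (at_left s2)"
    using isD[of s2] by (simp add: isCont_def filterlim_at_split)
  moreover have "(D \<longlongrightarrow> rc * tan (rc * s2)) (at_left s2)"
  proof -
    have "0 < rc * s2" using assms by simp
    hence "cos (rc * s2) > 0" using rcs2 by (intro cos_gt_zero_pi) auto
    hence "cos (rc * s2) \<noteq> 0" by simp
    hence "((\<lambda>x. rc * tan (rc * x)) \<longlongrightarrow> rc * tan (rc * s2)) (at_left s2)"
      by (intro tendsto_intros) auto
    moreover have "\<forall>\<^sub>F x in at_left s2. rc * tan (rc * x) = D x"
      using eventually_at_left_real[OF assms(8)] by eventually_elim (simp add: Dmid)
    ultimately show ?thesis by (rule tendsto_cong[THEN iffD1, rotated])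
  qed
  ultimately have D2: "D s2 = rc * tan (rc * s2)"
    using tendsto_unique trivial_limit_at_left_real by blast
  have match: "rc * tan (rc * s2) + tanh (s2 - sb) = 0" using D1 D2 by simp
  have "(u \<longlongrightarrow> u s2) (at_right s2)"
    using DERIV_isCont[OF Dr[of s2]] by (simp add: isCont_def filterlim_at_split)
  moreover have "(u \<longlongrightarrow> \<phi> s2) (at_right s2)"
  proof -
    have "(\<phi> \<longlongrightarrow> \<phi> s2) (at_right s2)" unfolding \<phi>_def
      by (intro tendsto_intros) (auto intro: order.strict_trans1[OF _ cosh_real_pos])
    moreover have "\<forall>\<^sub>F x in at_right s2. \<phi> x = u x"
      using eventually_at_right_less[of s2] by eventually_elim (simp add: uphi)
    ultimately show ?thesis by (rule tendsto_cong[THEN iffD1, rotated])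
  qed
  ultimately have "u s2 = \<phi> s2"
    using tendsto_unique trivial_limit_at_right_real by blast
  hence cont2: "p2 s2 = \<phi> s2" using up2[of s2] assms by simp
  have d2: "\<phi> x \<le> p2 x" if "0 \<le> x" "x \<le> s2" for x
  proof -
    have "(\<lambda>y. p2 y - \<phi> y) s2 \<le> (\<lambda>y. p2 y - \<phi> y) x"
    proof (rule DERIV_nonpos_imp_decreasing_open[OF that(2)])
      fix y assume y: "x < y" "y < s2"
      have ry0: "0 \<le> rc * y" "rc * y < rc * s2" using y that assms by auto
      have ry: "\<bar>rc * y\<bar> < pi/2" "0 \<le> rc * y" "rc * y < rc * s2" using ry0 rcs2 by auto
      have "((\<lambda>y. p2 y - \<phi> y) has_real_derivative rc * tan (rc * y) - - tanh (y - sb)) (at y)"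
        unfolding p2_def \<phi>_def by (intro derivative_intros deriv_p2 deriv_phi assms ry)
      moreover have "tan (rc * y) \<le> tan (rc * s2)"
        using ry rcs2 by (intro less_imp_le[OF tan_monotone]) auto
      moreover have "tanh (y - sb) \<le> tanh (s2 - sb)" using y by simp
      moreover have "rc * tan (rc * y) \<le> rc * tan (rc * s2)"
        using calculation(2) assms(2) by (intro mult_left_mono) auto
      moreover have "tanh (y - sb) \<le> tanh (s2 - sb)" using y by simp
      ultimately have "rc * tan (rc * y) - - tanh (y - sb) \<le> 0" using match by linarith
      thus "\<exists>d. ((\<lambda>y. p2 y - \<phi> y) has_real_derivative d) (at y) \<and> d \<le> 0"
        using \<open>((\<lambda>y. p2 y - \<phi> y) has_real_derivative _) (at y)\<close> by blast
    next
      have "\<forall>y\<in>{x..s2}. cos (rc * y) > 0"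
      proof
        fix y assume "y \<in> {x..s2}"
        hence "rc * y \<le> rc * s2" "0 \<le> rc * y" using that assms by auto
        hence "\<bar>rc * y\<bar> < pi/2" using rcs2 by linarith
        thus "cos (rc * y) > 0" by (intro cos_gt_zero_pi) auto
      qed
      thus "continuous_on {x..s2} (\<lambda>y. p2 y - \<phi> y)" unfolding p2_def \<phi>_def
        using assms(2) by (intro continuous_intros) auto
    qed
    thus ?thesis using cont2 by simp
  qed
  have phi_mono: "\<phi> x \<le> \<phi> 0" if "x \<le> 0" for x
  proof -
    have "cosh (0 - sb) \<le> cosh (x - sb)"
      using that assms by (subst cosh_real_nonpos_le_iff) auto
    thus ?thesis unfolding \<phi>_def by (simp add: ln_le_cancel_iff)
  qed
  have p20: "p2 0 = ln rc" unfolding p2_def using assms by (simp add: ln_div)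
  have lnrc: "ln rc < 0" using assms by simp
  show ?thesis
  proof (cases "s > 0")
    case True
    show ?thesis
    proof (cases "s \<le> s2")
      case True thus ?thesis using d2 up2 \<open>s > 0\<close> unfolding u_def \<phi>_def by force
    next
      case False thus ?thesis using uphi unfolding u_def \<phi>_def by force
    qed
  next
    case False
    have "\<phi> s \<le> ln rc" using phi_mono[of s] d2[of 0] p20 False assms by simp
    moreover have "ln rc \<le> u s"
    proof -
      consider "s \<le> s0" | "s0 < s" "s < - lc / rc" | "- lc / rc \<le> s" by linarith
      thus ?thesis
      proof cases
        case 1
        hence "u s = - s + se" unfolding u_def u_cb_def by simp
        thus ?thesis using 1 assms(6) lnrc by linarith
      next
        case 2
        have a1: "rc * s0 > - (lc + pi/2)" using assms(4) assms(2) by (simp add: field_simps)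
        have a2: "rc * s < - lc" using 2 assms(2) by (simp add: field_simps)
        have a3: "rc * s > rc * s0" using 2 assms(2) by simp
        have c: "cos (rc * s + lc) > 0" using a1 a2 a3 by (intro cos_gt_zero_pi) auto
        have "cos (rc * s + lc) \<le> 1" by simp
        hence "ln (cos (rc * s + lc)) \<le> 0" using c by simp
        moreover have "u s = ln rc - ln (cos (rc * s + lc))"
          unfolding u_def u_cb_def using 2 c assms by (simp add: ln_div)
        ultimately show ?thesis by simp
      next
        case 3 thus ?thesis unfolding u_def u_cb_def using assms False lcrc by auto
      qed
    qed
    ultimately show ?thesis unfolding u_def \<phi>_def by simp
  qed
qed

definition cmpf :: "real \<Rightarrow> real \<Rightarrow> real \<Rightarrow> complex \<Rightarrow> real" where
  "cmpf A B t z = ln (2 * (1 - t)) / 2 + ln 2 - ln (A + B * ((Re z)^2 + (Im z)^2))"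

lemma L1x:
  assumes "A > 0" "B > 0" "c \<ge> 0"
  shows "((\<lambda>\<xi>. k - ln (A + B * (\<xi>^2 + c))) has_real_derivative - (2 * B * x) / (A + B * (x^2 + c))) (at x)"
proof -
  have "A + B * (x^2 + c) > 0" using assms by (intro add_pos_nonneg) auto
  thus ?thesis by (auto intro!: derivative_eq_intros simp: field_simps)
qed

lemma L1y:
  assumes "A > 0" "B > 0" "c \<ge> 0"
  shows "((\<lambda>\<xi>. k - ln (A + B * (c + \<xi>^2))) has_real_derivative - (2 * B * x) / (A + B * (c + x^2))) (at x)"
  using L1x[OF assms, of k x] by (simp add: add.commute)

lemma L2x:
  assumes "A > 0" "B > 0" "c \<ge> 0"
  shows "((\<lambda>\<xi>. - (2 * B * \<xi>) / (A + B * (\<xi>^2 + c))) has_real_derivative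
     - 2 * B * (A + B * (c - x^2)) / (A + B * (x^2 + c))^2) (at x)"
proof -
  have "A + B * (x^2 + c) > 0" using assms by (intro add_pos_nonneg) auto
  hence g: "A + B * (x^2 + c) \<noteq> 0" by simp
  have f': "((\<lambda>\<xi>. - (2 * B * \<xi>)) has_real_derivative - (2 * B)) (at x)"
    by (auto intro!: derivative_eq_intros)
  have g': "((\<lambda>\<xi>. A + B * (\<xi>^2 + c)) has_real_derivative B * (2 * x)) (at x)"
    by (auto intro!: derivative_eq_intros)
  have "(- (2 * B)) * (A + B * (x^2 + c)) - (B * (2 * x)) * (- (2 * B * x)) = - 2 * B * (A + B * (c - x^2))"
    by (simp add: algebra_simps power2_eq_square)
  moreover have "(A + B * (x^2 + c)) ^ Suc (Suc 0) = (A + B * (x^2 + c))^2" by (simp add: numeral_2_eq_2)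
  ultimately show ?thesis
    using DERIV_quotient[OF f' g' g] by simp
qed

lemma L2y:
  assumes "A > 0" "B > 0" "c \<ge> 0"
  shows "((\<lambda>\<xi>. - (2 * B * \<xi>) / (A + B * (c + \<xi>^2))) has_real_derivative
     - 2 * B * (A + B * (c - x^2)) / (A + B * (c + x^2))^2) (at x)"
  using L2x[OF assms, of x] by (simp add: add.commute)

lemma Qpos: "A > 0 \<Longrightarrow> B > 0 \<Longrightarrow> A + B * ((a::real)^2 + b^2) > 0"
  by (intro add_pos_nonneg) auto

lemma pdx_cmpf: "A > 0 \<Longrightarrow> B > 0 \<Longrightarrow>
  pdx (cmpf A B t) z = - (2 * B * Re z) / (A + B * ((Re z)^2 + (Im z)^2))"
  unfolding pdx_def cmpf_def
  by (rule DERIV_imp_deriv) (use L1x[of A B "(Im z)^2" "ln (2 * (1 - t)) / 2 + ln 2" "Re z"] in simp)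

lemma pdy_cmpf: "A > 0 \<Longrightarrow> B > 0 \<Longrightarrow>
  pdy (cmpf A B t) z = - (2 * B * Im z) / (A + B * ((Re z)^2 + (Im z)^2))"
  unfolding pdy_def cmpf_def
  by (rule DERIV_imp_deriv) (use L1y[of A B "(Re z)^2" "ln (2 * (1 - t)) / 2 + ln 2" "Im z"] in simp)

lemma pdxx_cmpf: "A > 0 \<Longrightarrow> B > 0 \<Longrightarrow>
  pdx (pdx (cmpf A B t)) z = - 2 * B * (A + B * ((Im z)^2 - (Re z)^2)) / (A + B * ((Re z)^2 + (Im z)^2))^2"
  unfolding pdx_def[of "pdx _"] by (rule DERIV_imp_deriv) (use L2x[of A B "(Im z)^2" "Re z"] in \<open>simp add: pdx_cmpf\<close>)

lemma pdyy_cmpf: "A > 0 \<Longrightarrow> B > 0 \<Longrightarrow>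
  pdy (pdy (cmpf A B t)) z = - 2 * B * (A + B * ((Re z)^2 - (Im z)^2)) / (A + B * ((Re z)^2 + (Im z)^2))^2"
  unfolding pdy_def[of "pdy _"] by (rule DERIV_imp_deriv) (use L2y[of A B "(Re z)^2" "Im z"] in \<open>simp add: pdy_cmpf\<close>)

lemma lap_cmpf: "A > 0 \<Longrightarrow> B > 0 \<Longrightarrow>
  lap (cmpf A B t) z = - 4 * A * B / (A + B * ((Re z)^2 + (Im z)^2))^2"
proof -
  assume "A > 0" "B > 0"
  have e: "- 2 * B * (A + B * ((Im z)^2 - (Re z)^2)) + - 2 * B * (A + B * ((Re z)^2 - (Im z)^2)) = - 4 * A * B"
    by (simp add: algebra_simps)
  show ?thesis unfolding lap_def
    by (simp only: pdxx_cmpf[OF \<open>A>0\<close> \<open>B>0\<close>] pdyy_cmpf[OF \<open>A>0\<close> \<open>B>0\<close>] add_divide_distrib[symmetric] e)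
qed

lemma Qne: "A > 0 \<Longrightarrow> B > 0 \<Longrightarrow> A + B * ((a::real)^2 + b^2) \<noteq> 0"
  using Qpos[of A B a b] by simp

lemma exp_cmpf:
  assumes "A > 0" "B > 0" "t < 1"
  shows "exp (- 2 * cmpf A B t z) = (A + B * ((Re z)^2 + (Im z)^2))^2 / (8 * (1 - t))"
proof -
  define Q where "Q = A + B * ((Re z)^2 + (Im z)^2)"
  have Q: "Q > 0" unfolding Q_def using Qpos assms by blast
  have "- 2 * cmpf A B t z = 2 * ln Q - ln (1 - t) - 3 * ln 2"
  proof -
    have "ln (2 * (1 - t)) = ln 2 + ln (1 - t)" by (rule ln_mult_pos) (use assms in auto)
    moreover have "- 2 * cmpf A B t z = - ln (2 * (1 - t)) - 2 * ln 2 + 2 * ln Q"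
      unfolding cmpf_def Q_def by (simp add: algebra_simps)
    ultimately show ?thesis by linarith
  qed
  also have "\<dots> = ln (Q^2 / (8 * (1 - t)))"
  proof -
    have "ln ((8::real)) = 3 * ln 2" using ln_realpow[of 2 3] by simp
    moreover have "ln (8 * (1 - t)) = ln 8 + ln (1 - t)" by (rule ln_mult_pos) (use assms in auto)
    moreover have "ln (Q^2 / (8 * (1 - t))) = ln (Q^2) - ln (8 * (1 - t))" by (rule ln_divide_pos) (use assms Q in auto)
    moreover have "ln (Q^2) = 2 * ln Q" using Q by (simp add: ln_realpow)
    ultimately show ?thesis by linarith
  qed
  finally show ?thesis using Q assms by (simp add: Q_def)
qed

lemma rf_cmpf:
  assumes "A > 0" "B > 0" "A * B = 1" "T < 1"
  shows "ricci_flow_on {0..T} (cmpf A B)"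
  unfolding ricci_flow_on_def
proof (intro conjI ballI allI)
  show "continuous_on ({0..T} \<times> UNIV) (\<lambda>p. cmpf A B (fst p) (snd p))"
    unfolding cmpf_def using assms
    by (intro continuous_intros) (auto simp: Qne)
  have "(\<lambda>p. lap (cmpf A B (fst p)) (snd p)) = (\<lambda>p. - 4 * A * B / (A + B * ((Re (snd p))^2 + (Im (snd p))^2))^2)"
    using assms by (simp add: lap_cmpf)
  moreover have "continuous_on ({0..T} \<times> UNIV) \<dots>"
    using assms by (intro continuous_intros) (auto simp: Qne)
  ultimately show "continuous_on ({0..T} \<times> UNIV) (\<lambda>p. lap (cmpf A B (fst p)) (snd p))" by metis
next
  fix t z assume t: "t \<in> {0..T}"
  show "(\<lambda>\<xi>. cmpf A B t (Complex \<xi> (Im z))) differentiable at (Re z)"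
    unfolding real_differentiable_def cmpf_def
    using L1x[of A B "(Im z)^2" "ln (2 * (1 - t)) / 2 + ln 2" "Re z"] assms by auto
  show "(\<lambda>\<eta>. cmpf A B t (Complex (Re z) \<eta>)) differentiable at (Im z)"
    unfolding real_differentiable_def cmpf_def
    using L1y[of A B "(Re z)^2" "ln (2 * (1 - t)) / 2 + ln 2" "Im z"] assms by auto
  show "(\<lambda>\<xi>. pdx (cmpf A B t) (Complex \<xi> (Im z))) differentiable at (Re z)"
    unfolding real_differentiable_def
    using L2x[of A B "(Im z)^2" "Re z"] assms by (auto simp: pdx_cmpf)
  show "(\<lambda>\<eta>. pdy (cmpf A B t) (Complex (Re z) \<eta>)) differentiable at (Im z)"
    unfolding real_differentiable_def
    using L2y[of A B "(Re z)^2" "Im z"] assms by (auto simp: pdy_cmpf)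
  define Q where "Q = A + B * ((Re z)^2 + (Im z)^2)"
  have Q: "Q > 0" unfolding Q_def using Qpos assms by blast
  have t1: "t < 1" using t assms by auto
  have ne: "(8::real) - 8 * t \<noteq> 0" "(4::real) - 4 * t \<noteq> 0" using t1 by auto
  have e8: "4 / (8 - 8 * t) = 2 / (4 - 4 * t)" using ne by (simp add: field_simps)
  have "((\<lambda>\<tau>. cmpf A B \<tau> z) has_real_derivative (1 / (2 * (1 - t)) * (- 2)) / 2) (at t)"
    unfolding cmpf_def using t1 by (auto intro!: derivative_eq_intros simp: e8)
  moreover have "(1 / (2 * (1 - t)) * (- 2)) / 2 = exp (- 2 * cmpf A B t z) * lap (cmpf A B t) z"
  proof -
    have ex: "exp (- 2 * cmpf A B t z) = Q^2 / (8 * (1 - t))" using exp_cmpf[OF assms(1,2) t1] by (simp add: Q_def)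
    have lp: "lap (cmpf A B t) z = - 4 * A * B / Q^2" using lap_cmpf[OF assms(1,2)] by (simp add: Q_def)
    have "Q^2 / (8 * (1 - t)) * (- 4 * A * B / Q^2) = - 4 * (A * B) / (8 * (1 - t))" using Q by (simp add: field_simps)
    also have "\<dots> = (1 / (2 * (1 - t)) * (- 2)) / 2" using assms(3) t1 by (simp add: field_simps)
    finally have c: "Q^2 / (8 * (1 - t)) * (- 4 * A * B / Q^2) = (1 / (2 * (1 - t)) * (- 2)) / 2" .
    show ?thesis unfolding ex lp by (rule c[symmetric])
  qed
  ultimately show "((\<lambda>\<tau>. cmpf A B \<tau> z) has_real_derivative exp (- 2 * cmpf A B t z) * lap (cmpf A B t) z) (at t within {0..T})"
    by (simp add: has_field_derivative_at_within)
qed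

lemma cmpf_id:
  assumes "cmod z = exp (se - s)"
  shows "cmpf (exp (se - sb)) (exp (sb - se)) t z + (se - s) = - ln (cosh (s - sb)) + ln (2 * (1 - t)) / 2"
proof -
  have r2: "(Re z)^2 + (Im z)^2 = exp (se - s) ^ 2" using assms cmod_power2[of z] by simp
  have "exp (se - sb) + exp (sb - se) * exp (se - s) ^ 2 = exp (se - s) * (2 * cosh (s - sb))"
    by (simp add: cosh_field_def power2_eq_square algebra_simps flip: exp_add)
  hence "ln (exp (se - sb) + exp (sb - se) * ((Re z)^2 + (Im z)^2)) = (se - s) + ln 2 + ln (cosh (s - sb))"
    by (simp add: r2 ln_mult)
  thus ?thesis unfolding cmpf_def by simp
qed

theorem lemma5p1:
  fixes lc rc s0 se s2 sb :: real and w :: "real \<Rightarrow> complex \<Rightarrow> real"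
  assumes "lc > 1" and "0 < rc" and "rc < 1"
    and "- (lc + pi / 2) / rc < s0" and "s0 < - lc / rc"
    and "s0 < se" and "se < - lc / rc"
    and "0 < s2" and "s2 < pi / (2 * rc)"
    and "s2 < sb"
    and "u_cb lc rc s0 se s2 sb C1_differentiable_on UNIV"
    and "ic_ms_ricci_flow (w_cb lc rc s0 se s2 sb) w"
  shows "\<forall>t\<in>{0..<1}. \<forall>s \<theta>.
           w t (exp (Complex (se - s) \<theta>)) + (se - s) \<ge> - ln (cosh (s - sb)) + ln (2 * (1 - t)) / 2"
proof (intro ballI allI)
  fix t :: real and s \<theta> :: real assume t: "t \<in> {0..<1}"
  define A where "A = exp (se - sb)"
  define B where "B = exp (sb - se)"
  have A: "A > 0" and B: "B > 0" unfolding A_def B_def by simp_all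
  have AB: "A * B = 1" unfolding A_def B_def by (simp flip: exp_add)
  define T where "T = (1 + t) / 2"
  have T: "0 < T" "T < 1" "t \<in> {0..T}" using t unfolding T_def by auto
  note ic = assms(12)[unfolded ic_ms_ricci_flow_def]
  have ms: "maximally_stretched w"
    by (rule ic[THEN conjunct2, THEN conjunct2, THEN conjunct2, THEN conjunct2])
  have w0: "\<And>z. w 0 z = w_cb lc rc s0 se s2 sb z"
    by (rule ic[THEN conjunct2, THEN conjunct2, THEN conjunct1, rule_format])
  have init: "\<forall>z. cmpf A B 0 z \<le> w 0 z"
  proof
    fix z
    show "cmpf A B 0 z \<le> w 0 z"
    proof (cases "z = 0")
      case True
      have e1: "w 0 z = 3 / 2 * ln 2 + sb - se" using True by (simp add: w0 w_cb_def)
      have e2: "cmpf A B 0 z = ln 2 / 2 + ln 2 - (se - sb)" using True by (simp add: cmpf_def A_def)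
      show ?thesis using e1 e2 by linarith
    next
      case False
      define s' where "s' = se - ln (cmod z)"
      have cz: "cmod z = exp (se - s')" unfolding s'_def using False by simp
      have "cmpf A B 0 z + (se - s') = - ln (cosh (s' - sb)) + ln (2 * (1 - 0)) / 2"
        unfolding A_def B_def by (rule cmpf_id[OF cz])
      also have "\<dots> \<le> u_cb lc rc s0 se s2 sb s'"
        using static_ineq[OF assms(1-11), of s'] by simp
      finally have le0: "cmpf A B 0 z + (se - s') \<le> u_cb lc rc s0 se s2 sb s'" .
      have "w 0 z = u_cb lc rc s0 se s2 sb s' - (se - s')"
        unfolding w0 w_cb_def s'_def using False by simp
      thus ?thesis using le0 by linarith
    qed
  qed
  have ms': "\<And>T v. 0 < T \<Longrightarrow> ricci_flow_on {0..T} v \<Longrightarrow> (\<forall>z. v 0 z \<le> w 0 z) \<Longrightarrow>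
      \<forall>t\<in>{0..T}. \<forall>z. v t z \<le> w t z"
    using ms by (simp add: maximally_stretched_def)
  have "\<forall>\<tau>\<in>{0..T}. \<forall>z. cmpf A B \<tau> z \<le> w \<tau> z"
    by (rule ms'[OF T(1) rf_cmpf[OF A B AB T(2)] init])
  hence le: "cmpf A B t (exp (Complex (se - s) \<theta>)) \<le> w t (exp (Complex (se - s) \<theta>))"
    using T(3) by blast
  have cz: "cmod (exp (Complex (se - s) \<theta>)) = exp (se - s)" by simp
  have "cmpf A B t (exp (Complex (se - s) \<theta>)) + (se - s) = - ln (cosh (s - sb)) + ln (2 * (1 - t)) / 2"
    unfolding A_def B_def by (rule cmpf_id[OF cz])
  thus "w t (exp (Complex (se - s) \<theta>)) + (se - s) \<ge> - ln (cosh (s - sb)) + ln (2 * (1 - t)) / 2"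
    using le by linarith
qed

end
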